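(* For all integers $1\le k\le n$, $\hat E_{k,n}(q)=\hat E_{n+1-k,n}(q)$.
   Context: Place $1,\dots,n$ clockwise on a circle. Distinct $p_1,\dots,p_m$ are in clockwise cyclic order if $(p_2-p_1)\bmod n<\dots<(p_m-p_1)\bmod n$ (residues in $\{0,\dots,n-1\}$). For $\pi\in S_n$ (fixed points regarded as "counterclockwise loops"), an ordered pair $(i,j)$, $i\ne j$, is aligned if $\pi(j)\ne j$, the entries of $(i,\pi(i),\pi(j),j)$ are pairwise distinct except that possibly $i=\pi(i)$, and the distinct entries in this order are in clockwise cyclic order. An alignment is an unordered pair $\{i,j\}$ with $(i,j)$ or $(j,i)$ aligned; $\mathrm{al}(\pi)$ is their number. A weak excedence of $\pi$ is an $i$ with $\pi(i)\ge i$. $E_{k,n}(q)=\sum q^{k(n-k)-\mathrm{al}(\pi)}$ over $\pi\in S_n$ with exactly $k$ weak excedences, and $\hat E_{k,n}(q)=q^{k-n}E_{k,n}(q)$. *)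

theory Defs
  imports "HOL-Combinatorics.Permutations" "HOL-Computational_Algebra.Formal_Laurent_Series"
begin

definition cyclic_order :: "nat \<Rightarrow> nat list \<Rightarrow> bool" where
  "cyclic_order n ps \<longleftrightarrow> distinct ps \<and>
     sorted_wrt (<) (map (\<lambda>p. (int p - int (hd ps)) mod int n) (tl ps))"

definition aligned :: "nat \<Rightarrow> (nat \<Rightarrow> nat) \<Rightarrow> nat \<Rightarrow> nat \<Rightarrow> bool" where
  "aligned n \<pi> i j \<longleftrightarrow> i \<noteq> j \<and> \<pi> j \<noteq> j \<and>
     (let ps = (if \<pi> i = i then [i, \<pi> j, j] else [i, \<pi> i, \<pi> j, j])
      in distinct ps \<and> cyclic_order n ps)"

definition al :: "nat \<Rightarrow> (nat \<Rightarrow> nat) \<Rightarrow> nat" where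
  "al n \<pi> = card {e. \<exists>i\<in>{1..n}. \<exists>j\<in>{1..n}. e = {i, j} \<and>
                        (aligned n \<pi> i j \<or> aligned n \<pi> j i)}"

definition wex :: "nat \<Rightarrow> (nat \<Rightarrow> nat) \<Rightarrow> nat" where
  "wex n \<pi> = card {i \<in> {1..n}. \<pi> i \<ge> i}"

definition E_poly :: "nat \<Rightarrow> nat \<Rightarrow> int fls" where
  "E_poly k n = (\<Sum>\<pi> \<in> {\<pi>. \<pi> permutes {1..n} \<and> wex n \<pi> = k}.
       fls_X_intpow (int (k * (n - k)) - int (al n \<pi>)))"

definition E_hat :: "nat \<Rightarrow> nat \<Rightarrow> int fls" where
  "E_hat k n = fls_X_intpow (int k - int n) * E_poly k n"

end

theory Submission
  imports Defs
begin

definition c3 :: "int \<Rightarrow> int \<Rightarrow> int \<Rightarrow> bool" where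
  "c3 x y z \<longleftrightarrow> (x<y \<and> y<z) \<or> (y<z \<and> z<x) \<or> (z<x \<and> x<y)"

definition B4 :: "int \<Rightarrow> int \<Rightarrow> int \<Rightarrow> int \<Rightarrow> bool" where
  "B4 i xi j pj \<longleftrightarrow> i \<noteq> j \<and> pj \<noteq> j \<and>
     (if xi = i then distinct [i, pj, j] \<and> c3 i pj j
      else distinct [i, xi, pj, j] \<and> c3 i xi pj \<and> c3 i pj j)"


lemma core_int:
  fixes a b c d n pa pc :: int
  assumes "1 \<le> a" "a \<le> n" "1 \<le> b" "b \<le> n" "1 \<le> c" "c \<le> n" "1 \<le> d" "d \<le> n"
    "(a = c) = (b = d)"
    "pa = (if a = 1 then n else a - 1)" "pc = (if c = 1 then n else c - 1)"
  shows "B4 a b c d \<longleftrightarrow> B4 d pc b pa"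
  using assms unfolding B4_def c3_def
  by (smt (z3) distinct.simps list.set insert_iff empty_iff)

lemma modlem:
  fixes x y n :: int
  assumes "1 \<le> x" "x \<le> n" "1 \<le> y" "y \<le> n"
  shows "(x - y) mod n = (if y \<le> x then x - y else x - y + n)"
proof (cases "y \<le> x")
  case True thus ?thesis using assms by (simp add: mod_pos_pos_trivial)
next
  case False
  have "(x - y) mod n = (x - y + n) mod n" by simp
  also have "\<dots> = x - y + n" using assms False by (intro mod_pos_pos_trivial) auto
  finally show ?thesis using False by simp
qed

lemma co3:
  assumes "a \<in> {1..n}" "b \<in> {1..n}" "c \<in> {1..n}" "distinct [a,b,c]"
  shows "cyclic_order n [a,b,c] \<longleftrightarrow> c3 (int a) (int b) (int c)"
  using assms unfolding cyclic_order_def c3_def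
  by (auto simp: modlem)

lemma co4:
  assumes "a \<in> {1..n}" "b \<in> {1..n}" "c \<in> {1..n}" "d \<in> {1..n}" "distinct [a,b,c,d]"
  shows "cyclic_order n [a,b,c,d] \<longleftrightarrow> c3 (int a) (int b) (int c) \<and> c3 (int a) (int c) (int d)"
  using assms unfolding cyclic_order_def c3_def
  by (auto simp: modlem)


definition prd :: "nat \<Rightarrow> nat \<Rightarrow> nat" where
  "prd n x = (if x \<in> {2..n} then x - 1 else if x = 1 then n else x)"

definition sc :: "nat \<Rightarrow> nat \<Rightarrow> nat" where
  "sc n x = (if x \<in> {1..<n} then x + 1 else if x = n then 1 else x)"

lemma prd_sc: "1 \<le> n \<Longrightarrow> prd n (sc n x) = x"
  unfolding prd_def sc_def by auto

lemma sc_prd: "1 \<le> n \<Longrightarrow> sc n (prd n x) = x"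
  unfolding prd_def sc_def by auto

lemma prd_permutes: "1 \<le> n \<Longrightarrow> prd n permutes {1..n}"
  unfolding permutes_def
proof (intro conjI allI impI)
  fix x assume "x \<notin> {1..n}" "1 \<le> n" thus "prd n x = x" unfolding prd_def by auto
next
  fix y assume "1 \<le> n"
  show "\<exists>!x. prd n x = y"
  proof
    show "prd n (sc n y) = y" using \<open>1 \<le> n\<close> by (rule prd_sc)
  next
    fix x assume "prd n x = y"
    thus "x = sc n y" using sc_prd[OF \<open>1 \<le> n\<close>, of x] by simp
  qed
qed

lemma sc_permutes: "1 \<le> n \<Longrightarrow> sc n permutes {1..n}"
  unfolding permutes_def
proof (intro conjI allI impI)
  fix x assume "x \<notin> {1..n}" "1 \<le> n" thus "sc n x = x" unfolding sc_def by auto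
next
  fix y assume "1 \<le> n"
  show "\<exists>!x. sc n x = y"
  proof
    show "sc n (prd n y) = y" using \<open>1 \<le> n\<close> by (rule sc_prd)
  next
    fix x assume "sc n x = y"
    thus "x = prd n y" using prd_sc[OF \<open>1 \<le> n\<close>, of x] by simp
  qed
qed

definition phi :: "nat \<Rightarrow> (nat \<Rightarrow> nat) \<Rightarrow> nat \<Rightarrow> nat" where
  "phi n p = prd n \<circ> inv p"

definition psi :: "nat \<Rightarrow> (nat \<Rightarrow> nat) \<Rightarrow> nat \<Rightarrow> nat" where
  "psi n s = inv (sc n \<circ> s)"

lemma phi_permutes: "1 \<le> n \<Longrightarrow> p permutes {1..n} \<Longrightarrow> phi n p permutes {1..n}"
  unfolding phi_def by (intro permutes_compose permutes_inv prd_permutes)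

lemma psi_permutes: "1 \<le> n \<Longrightarrow> s permutes {1..n} \<Longrightarrow> psi n s permutes {1..n}"
  unfolding psi_def by (intro permutes_compose permutes_inv sc_permutes)

lemma psi_phi: "1 \<le> n \<Longrightarrow> p permutes {1..n} \<Longrightarrow> psi n (phi n p) = p"
proof -
  assume n: "1 \<le> n" and p: "p permutes {1..n}"
  have "sc n \<circ> phi n p = inv p" unfolding phi_def using sc_prd[OF n] by (auto simp: fun_eq_iff)
  thus ?thesis unfolding psi_def using permutes_inv_inv[OF p] by simp
qed

lemma phi_psi: "1 \<le> n \<Longrightarrow> s permutes {1..n} \<Longrightarrow> phi n (psi n s) = s"
proof -
  assume n: "1 \<le> n" and s: "s permutes {1..n}"
  have "sc n \<circ> s permutes {1..n}" by (intro permutes_compose s sc_permutes n)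
  hence "inv (psi n s) = sc n \<circ> s" unfolding psi_def by (rule permutes_inv_inv)
  thus ?thesis unfolding phi_def using prd_sc[OF n] by (auto simp: fun_eq_iff)
qed

lemma phi_at: "p permutes {1..n} \<Longrightarrow> phi n p (p x) = prd n x"
  unfolding phi_def by (simp add: permutes_inverses(2))

lemma wex_phi:
  assumes n: "1 \<le> n" and p: "p permutes {1..n}"
  shows "wex n (phi n p) = n + 1 - wex n p"
proof -
  have inj: "inj p" using p permutes_inj by blast
  have "{x \<in> {1..n}. phi n p x \<ge> x} = p ` {y \<in> {1..n}. prd n y \<ge> p y}"
  proof (intro set_eqI iffI)
    fix x assume x: "x \<in> {x \<in> {1..n}. phi n p x \<ge> x}"
    have "x = p (inv p x)" using p by (simp add: permutes_inverses(1))
    moreover have "inv p x \<in> {1..n}" using x permutes_in_image[OF permutes_inv[OF p]] by auto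
    ultimately show "x \<in> p ` {y \<in> {1..n}. prd n y \<ge> p y}" using x phi_at[OF p, of "inv p x"]
      by (metis (mono_tags, lifting) image_eqI mem_Collect_eq)
  next
    fix x assume "x \<in> p ` {y \<in> {1..n}. prd n y \<ge> p y}"
    then obtain y where y: "y \<in> {1..n}" "prd n y \<ge> p y" "x = p y" by auto
    thus "x \<in> {x \<in> {1..n}. phi n p x \<ge> x}" using phi_at[OF p, of y] permutes_in_image[OF p] by auto
  qed
  hence c1: "wex n (phi n p) = card {y \<in> {1..n}. prd n y \<ge> p y}"
    unfolding wex_def using card_image[OF inj_on_subset[OF inj]] by simp
  have pin: "\<And>y. y \<in> {1..n} \<Longrightarrow> p y \<in> {1..n}" using permutes_in_image[OF p] by auto
  have "{y \<in> {1..n}. prd n y \<ge> p y} = insert 1 {y \<in> {1..n}. p y < y}"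
  proof (intro set_eqI iffI)
    fix y assume "y \<in> {y \<in> {1..n}. prd n y \<ge> p y}"
    thus "y \<in> insert 1 {y \<in> {1..n}. p y < y}" unfolding prd_def by (auto split: if_splits)
  next
    fix y assume "y \<in> insert 1 {y \<in> {1..n}. p y < y}"
    thus "y \<in> {y \<in> {1..n}. prd n y \<ge> p y}" using n pin[of y] unfolding prd_def by auto
  qed
  moreover have "1 \<notin> {y \<in> {1..n}. p y < y}" using pin[of 1] n by auto
  ultimately have c2: "card {y \<in> {1..n}. prd n y \<ge> p y} = 1 + card {y \<in> {1..n}. p y < y}" by simp
  have "{1..n} = {y \<in> {1..n}. p y < y} \<union> {y \<in> {1..n}. p y \<ge> y}" by auto
  hence "n = card {y \<in> {1..n}. p y < y} + card {y \<in> {1..n}. p y \<ge> y}"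
    by (metis (no_types, lifting) card_Un_disjoint card_atLeastAtMost diff_Suc_1 disjoint_iff
        finite_Un finite_atLeastAtMost mem_Collect_eq not_le)
  thus ?thesis using c1 c2 unfolding wex_def by simp
qed


lemma aligned_B4:
  assumes "i \<in> {1..n}" "j \<in> {1..n}" "p i \<in> {1..n}" "p j \<in> {1..n}"
  shows "aligned n p i j \<longleftrightarrow> B4 (int i) (int (p i)) (int j) (int (p j))"
proof (cases "p i = i")
  case True
  thus ?thesis using assms unfolding aligned_def B4_def Let_def
    by (auto simp: co3)
next
  case False
  thus ?thesis using assms unfolding aligned_def B4_def Let_def
    by (auto simp: co4)
qed

lemma int_prd: "x \<in> {1..n} \<Longrightarrow> int (prd n x) = (if int x = 1 then int n else int x - 1)"
  unfolding prd_def by auto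

lemma key:
  assumes n: "1 \<le> n" and p: "p permutes {1..n}" and i: "i \<in> {1..n}" and j: "j \<in> {1..n}"
  shows "aligned n (phi n p) (p j) (p i) \<longleftrightarrow> aligned n p i j"
proof -
  have pin: "\<And>y. y \<in> {1..n} \<Longrightarrow> p y \<in> {1..n}" using permutes_in_image[OF p] by auto
  have prin: "\<And>y. y \<in> {1..n} \<Longrightarrow> prd n y \<in> {1..n}" unfolding prd_def by auto
  have injp: "(i = j) = (p i = p j)" using permutes_inj[OF p] by (auto dest: injD)
  have "aligned n (phi n p) (p j) (p i) \<longleftrightarrow>
     B4 (int (p j)) (int (prd n j)) (int (p i)) (int (prd n i))"
    using aligned_B4[of "p j" n "p i" "phi n p"] pin i j prin phi_at[OF p] by simp
  also have "\<dots> \<longleftrightarrow> B4 (int i) (int (p i)) (int j) (int (p j))"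
    using core_int[of "int i" n "int (p i)" "int j" "int (p j)" "int (prd n i)" "int (prd n j)"]
      i j pin[OF i] pin[OF j] injp int_prd[OF i] int_prd[OF j] by auto
  also have "\<dots> \<longleftrightarrow> aligned n p i j"
    using aligned_B4[of i n j p] i j pin by simp
  finally show ?thesis .
qed

definition AS :: "nat \<Rightarrow> (nat \<Rightarrow> nat) \<Rightarrow> nat set set" where
  "AS n s = {e. \<exists>i\<in>{1..n}. \<exists>j\<in>{1..n}. e = {i, j} \<and> (aligned n s i j \<or> aligned n s j i)}"

lemma AS_phi:
  assumes n: "1 \<le> n" and p: "p permutes {1..n}"
  shows "AS n (phi n p) = (\<lambda>e. p ` e) ` AS n p"
proof (intro set_eqI iffI)
  have pin: "\<And>y. y \<in> {1..n} \<Longrightarrow> p y \<in> {1..n}" using permutes_in_image[OF p] by auto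
  have ipin: "\<And>y. y \<in> {1..n} \<Longrightarrow> inv p y \<in> {1..n}" using permutes_in_image[OF permutes_inv[OF p]] by auto
  have pinv: "\<And>y. p (inv p y) = y" using p by (simp add: permutes_inverses(1))
  {
    fix e assume "e \<in> AS n (phi n p)"
    then obtain x y where xy: "x \<in> {1..n}" "y \<in> {1..n}" "e = {x, y}"
      "aligned n (phi n p) x y \<or> aligned n (phi n p) y x" unfolding AS_def by auto
    define i where "i = inv p y"
    define j where "j = inv p x"
    have ij: "i \<in> {1..n}" "j \<in> {1..n}" "x = p j" "y = p i" using ipin pinv xy unfolding i_def j_def by auto
    have "aligned n p i j \<or> aligned n p j i" using xy(4) key[OF n p ij(1,2)] key[OF n p ij(2,1)] ij by auto
    hence "{i, j} \<in> AS n p" unfolding AS_def using ij by blast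
    moreover have "e = p ` {i, j}" using ij xy by auto
    ultimately show "e \<in> (\<lambda>e. p ` e) ` AS n p" by blast
  next
    fix e assume "e \<in> (\<lambda>e. p ` e) ` AS n p"
    then obtain i j where ij: "i \<in> {1..n}" "j \<in> {1..n}" "e = p ` {i, j}"
      "aligned n p i j \<or> aligned n p j i" unfolding AS_def by auto
    have "aligned n (phi n p) (p j) (p i) \<or> aligned n (phi n p) (p i) (p j)"
      using ij(4) key[OF n p ij(1,2)] key[OF n p ij(2,1)] by auto
    moreover have "e = {p j, p i}" using ij by auto
    ultimately show "e \<in> AS n (phi n p)" unfolding AS_def using pin ij by blast
  }
qed

lemma al_phi:
  assumes n: "1 \<le> n" and p: "p permutes {1..n}"
  shows "al n (phi n p) = al n p"
proof -
  have inj: "inj p" using p permutes_inj by blast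
  have "inj_on (\<lambda>e. p ` e) (AS n p)" using inj by (auto simp: inj_on_def inj_image_eq_iff)
  hence "card (AS n (phi n p)) = card (AS n p)" using AS_phi[OF n p] card_image by metis
  thus ?thesis unfolding al_def AS_def .
qed

theorem mainTheorem10:
  fixes k n :: nat
  assumes "1 \<le> k" and "k \<le> n"
  shows "E_hat k n = E_hat (n + 1 - k) n"
proof -
  have n: "1 \<le> n" using assms by simp
  define k' where "k' = n + 1 - k"
  have k': "1 \<le> k'" "k' \<le> n" "k = n + 1 - k'" using assms unfolding k'_def by auto
  have gen: "E_hat m n = (\<Sum>\<pi> \<in> {\<pi>. \<pi> permutes {1..n} \<and> wex n \<pi> = m}.
       fls_X_intpow (int m - int n + int (m * (n - m)) - int (al n \<pi>)))" for m
    unfolding E_hat_def E_poly_def sum_distrib_left fls_X_intpow_times_fls_X_intpow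
    by (simp add: algebra_simps)
  have ex: "int k - int n + int (k * (n - k)) = int k' - int n + int (k' * (n - k'))"
  proof -
    obtain a b where ab: "k = Suc a" "n = k + b" using assms by (metis Suc_le_D le_Suc_ex One_nat_def Suc_le_mono)
    have "k' = Suc b" "n - k = b" "n - k' = a" using ab unfolding k'_def by auto
    thus ?thesis using ab by (simp add: algebra_simps)
  qed
  have "E_hat k n = E_hat k' n"
    unfolding gen
  proof (rule sum.reindex_bij_witness[where i = "psi n" and j = "phi n"])
    fix a assume a: "a \<in> {\<pi>. \<pi> permutes {1..n} \<and> wex n \<pi> = k}"
    show "psi n (phi n a) = a" using psi_phi[OF n] a by auto
    show "phi n a \<in> {\<pi>. \<pi> permutes {1..n} \<and> wex n \<pi> = k'}"
      using phi_permutes[OF n] wex_phi[OF n] a unfolding k'_def by auto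
    show "fls_X_intpow (int k' - int n + int (k' * (n - k')) - int (al n (phi n a))) =
          fls_X_intpow (int k - int n + int (k * (n - k)) - int (al n a))"
    proof -
      have "al n (phi n a) = al n a" using al_phi[OF n] a by auto
      hence "int k' - int n + int (k' * (n - k')) - int (al n (phi n a)) =
             int k - int n + int (k * (n - k)) - int (al n a)" using ex by linarith
      thus ?thesis by (rule arg_cong)
    qed
  next
    fix b assume b: "b \<in> {\<pi>. \<pi> permutes {1..n} \<and> wex n \<pi> = k'}"
    show "phi n (psi n b) = b" using phi_psi[OF n] b by auto
    have "wex n (phi n (psi n b)) = n + 1 - wex n (psi n b)"
      using wex_phi[OF n psi_permutes[OF n]] b by auto
    moreover have "wex n (psi n b) \<le> n" 
    proof -
      have "card {i \<in> {1..n}. psi n b i \<ge> i} \<le> card {1..n}" by (rule card_mono) auto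
      thus ?thesis unfolding wex_def by simp
    qed
    ultimately have "wex n (psi n b) = k" using phi_psi[OF n] b k' by auto
    thus "psi n b \<in> {\<pi>. \<pi> permutes {1..n} \<and> wex n \<pi> = k}"
      using psi_permutes[OF n] b by auto
  qed
  thus ?thesis unfolding k'_def .
qed

end
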